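(* Let $O$ be a set of Boolean functions, $\textsc{prop}$ a finite set of propositional variables, and $p$ a propositional variable. Then $\mathrm{PL}_O[\textsc{prop}]\leq_{pc}\mathrm{ML}_{O\cup\{\Diamond\}}[\{p\}]$ and $\mathrm{PL}_O[\textsc{prop}]\leq_{pc}\mathrm{ML}_{O\cup\{\Box\}}[\{p\}]$.
   Context: $\mathrm{PL}_O[\textsc{prop}]$ is the set of propositional formulas $\phi::=x\mid f(\phi_1,\dots,\phi_n)$ with $x\in\textsc{prop}$ and $f\in O$, viewed as a concept class with examples the truth assignments $V:\textsc{prop}\to\{0,1\}$ and $\lambda(\phi)$ the set of satisfying assignments. $\mathrm{ML}_{O\cup\{\Diamond\}}[\{p\}]$ is the set of modal formulas $\phi::=p\mid f(\phi_1,\dots,\phi_n)\mid\Diamond\phi$ with $f\in O$ (Boolean functions interpreted pointwise), and similarly with $\Box$; it is viewed as a concept class whose examples are pointed finite Kripke models $(M,w)$ and $\lambda(\phi)=\{(M,w)\mid M,w\models\phi\}$. For concept classes $\mathcal{C}_i=(C_i,E_i,\lambda_i)$, $\mathcal{C}_1\leq_{pc}\mathcal{C}_2$ means there are $f:C_1\to C_2$ and $h:E_1\to E_2$ such that (i) for all $c\in C_1,e\in E_1$: $e\in\lambda_1(c)$ iff $h(e)\in\lambda_2(f(c))$; and (ii) for each $e\in E_2$, either $e\in\lambda_2(f(c))$ for all $c\in C_1$, or for no $c\in C_1$, or there is $e'\in E_1$ with $\{c\mid e\in\lambda_2(f(c))\}=\{c\mid e'\in\lambda_1(c)\}$. *)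

theory Defs
  imports Main
begin

text \<open>A concept class is given by a set of concepts C, a set of examples E and a
  labelling lam, where lam c e means e \<in> \<lambda>(c).\<close>

definition pc_reducible ::
  "'c1 set \<Rightarrow> 'e1 set \<Rightarrow> ('c1 \<Rightarrow> 'e1 \<Rightarrow> bool) \<Rightarrow>
   'c2 set \<Rightarrow> 'e2 set \<Rightarrow> ('c2 \<Rightarrow> 'e2 \<Rightarrow> bool) \<Rightarrow> bool" where
  "pc_reducible C1 E1 lam1 C2 E2 lam2 \<longleftrightarrow>
     (\<exists>f h. (\<forall>c\<in>C1. f c \<in> C2) \<and> (\<forall>e\<in>E1. h e \<in> E2) \<and>
       (\<forall>c\<in>C1. \<forall>e\<in>E1. lam1 c e \<longleftrightarrow> lam2 (f c) (h e)) \<and>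
       (\<forall>e\<in>E2. (\<forall>c\<in>C1. lam2 (f c) e) \<or> (\<forall>c\<in>C1. \<not> lam2 (f c) e) \<or>
                (\<exists>e'\<in>E1. \<forall>c\<in>C1. lam2 (f c) e \<longleftrightarrow> lam1 c e')))"

text \<open>A Boolean function of arity n is a pair (n, g) where g maps argument
  lists (of length n) to a truth value.\<close>

type_synonym bfun = "nat \<times> (bool list \<Rightarrow> bool)"

datatype 'v pl = PVar 'v | PApp bfun "'v pl list"

fun pl_wf :: "bfun set \<Rightarrow> 'v set \<Rightarrow> 'v pl \<Rightarrow> bool" where
  "pl_wf Ops P (PVar x) \<longleftrightarrow> x \<in> P"
| "pl_wf Ops P (PApp f args) \<longleftrightarrow> f \<in> Ops \<and> length args = fst f \<and> (\<forall>a\<in>set args. pl_wf Ops P a)"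

fun pl_sat :: "('v \<Rightarrow> bool) \<Rightarrow> 'v pl \<Rightarrow> bool" where
  "pl_sat V (PVar x) = V x"
| "pl_sat V (PApp f args) = snd f (map (pl_sat V) args)"

definition PL_concepts :: "bfun set \<Rightarrow> 'v set \<Rightarrow> 'v pl set" where
  "PL_concepts Ops P = {\<phi>. pl_wf Ops P \<phi>}"

text \<open>Truth assignments V : prop \<rightarrow> {0,1} (extensional: False outside prop).\<close>
definition PL_examples :: "'v set \<Rightarrow> ('v \<Rightarrow> bool) set" where
  "PL_examples P = {V. \<forall>x. x \<notin> P \<longrightarrow> V x = False}"

datatype 'v ml = MVar 'v | MApp bfun "'v ml list" | MDia "'v ml" | MBox "'v ml"

text \<open>ML over operators Ops plus diamond (dia = True) or box (dia = False),
  with propositional variables from P.\<close>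
fun ml_wf :: "bfun set \<Rightarrow> bool \<Rightarrow> 'v set \<Rightarrow> 'v ml \<Rightarrow> bool" where
  "ml_wf Ops d P (MVar x) \<longleftrightarrow> x \<in> P"
| "ml_wf Ops d P (MApp f args) \<longleftrightarrow> f \<in> Ops \<and> length args = fst f \<and> (\<forall>a\<in>set args. ml_wf Ops d P a)"
| "ml_wf Ops d P (MDia \<phi>) \<longleftrightarrow> d \<and> ml_wf Ops d P \<phi>"
| "ml_wf Ops d P (MBox \<phi>) \<longleftrightarrow> \<not> d \<and> ml_wf Ops d P \<phi>"

type_synonym 'v pkripke = "nat set \<times> (nat \<times> nat) set \<times> ('v \<Rightarrow> nat set) \<times> nat"

fun ml_sat :: "(nat \<times> nat) set \<Rightarrow> ('v \<Rightarrow> nat set) \<Rightarrow> nat \<Rightarrow> 'v ml \<Rightarrow> bool" where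
  "ml_sat R Val w (MVar x) \<longleftrightarrow> w \<in> Val x"
| "ml_sat R Val w (MApp f args) = snd f (map (ml_sat R Val w) args)"
| "ml_sat R Val w (MDia \<phi>) \<longleftrightarrow> (\<exists>v. (w, v) \<in> R \<and> ml_sat R Val v \<phi>)"
| "ml_sat R Val w (MBox \<phi>) \<longleftrightarrow> (\<forall>v. (w, v) \<in> R \<longrightarrow> ml_sat R Val v \<phi>)"

definition Modal_concepts :: "bfun set \<Rightarrow> bool \<Rightarrow> 'v set \<Rightarrow> 'v ml set" where
  "Modal_concepts Ops d P = {\<phi>. ml_wf Ops d P \<phi>}"

definition Modal_examples :: "'v set \<Rightarrow> 'v pkripke set" where
  "Modal_examples P = {(W, R, Val, w). finite W \<and> W \<noteq> {} \<and> R \<subseteq> W \<times> W \<and> w \<in> W \<and>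
      (\<forall>x. Val x \<subseteq> W) \<and> (\<forall>x. x \<notin> P \<longrightarrow> Val x = {})}"

definition Modal_label :: "'v ml \<Rightarrow> 'v pkripke \<Rightarrow> bool" where
  "Modal_label \<phi> M = (case M of (W, R, Val, w) \<Rightarrow> ml_sat R Val w \<phi>)"

end

theory Submission
  imports Defs
begin

definition mop :: "bool \<Rightarrow> 'v ml \<Rightarrow> 'v ml" where
  "mop d = (if d then MDia else MBox)"

fun tr :: "('v \<Rightarrow> nat) \<Rightarrow> bool \<Rightarrow> 'v \<Rightarrow> 'v pl \<Rightarrow> 'v ml" where
  "tr g d p (PVar x) = (mop d ^^ Suc (g x)) (MVar p)"
| "tr g d p (PApp f args) = MApp f (map (tr g d p) args)"

lemma wf_iter: "ml_wf Ops d {p} ((mop d ^^ k) (MVar p))"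
  by (induction k) (auto simp: mop_def)

lemma wf_tr: "pl_wf Ops P \<phi> \<Longrightarrow> ml_wf Ops d {p} (tr g d p \<phi>)"
proof (induction \<phi>)
  case (PVar x)
  show ?case using wf_iter[of Ops d p "Suc (g x)"] by simp
qed auto

lemma sat_tr:
  assumes "pl_wf Ops P \<phi>" "\<forall>x\<in>P. V x = ml_sat R Val w (tr g d p (PVar x))"
  shows "ml_sat R Val w (tr g d p \<phi>) = pl_sat V \<phi>"
  using assms
proof (induction \<phi>)
  case (PVar x)
  then show ?case by simp
next
  case (PApp f args)
  then have "map (ml_sat R Val w \<circ> tr g d p) args = map (pl_sat V) args"
    by (intro map_cong) auto
  then show ?case by (metis ml_sat.simps(2) pl_sat.simps(2) tr.simps(2) map_map)
qed

definition chainR :: "nat \<Rightarrow> (nat \<times> nat) set" where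
  "chainR n = {(i, Suc i) | i. i < n}"

lemma chain_iter:
  "j + k \<le> n \<Longrightarrow> ml_sat (chainR n) Val j ((mop d ^^ k) (MVar p)) = (j + k \<in> Val p)"
proof (induction k arbitrary: j)
  case 0
  then show ?case by simp
next
  case (Suc k)
  have IH: "ml_sat (chainR n) Val (Suc j) ((mop d ^^ k) (MVar p)) = (Suc j + k \<in> Val p)"
    using Suc by simp
  have succ: "(j, v) \<in> chainR n \<longleftrightarrow> v = Suc j" for v
    using Suc.prems by (auto simp: chainR_def)
  show ?case using IH succ by (cases d) (auto simp: mop_def)
qed

lemma main:
  fixes Ops :: "bfun set" and P :: "'v set" and p :: 'v
  assumes "finite P"
  shows "pc_reducible (PL_concepts Ops P) (PL_examples P) (\<lambda>\<phi> V. pl_sat V \<phi>)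
           (Modal_concepts Ops d {p}) (Modal_examples {p}) Modal_label"
proof -
  obtain g :: "'v \<Rightarrow> nat" and n where gP: "g ` P = {i. i < n}" and inj: "inj_on g P"
    using finite_imp_inj_to_nat_seg[OF assms] by blast
  define f where "f = tr g d p"
  define ValV where "ValV = (\<lambda>V::'v \<Rightarrow> bool. \<lambda>y. if y = p then {Suc (g x) | x. x \<in> P \<and> V x} else ({}::nat set))"
  define h where "h = (\<lambda>V. ({..n}, chainR n, ValV V, 0::nat))"
  have gl: "x \<in> P \<Longrightarrow> g x < n" for x using gP by blast
  have C: "\<forall>c\<in>PL_concepts Ops P. f c \<in> Modal_concepts Ops d {p}"
    by (auto simp: PL_concepts_def Modal_concepts_def f_def wf_tr)
  have E: "\<forall>e\<in>PL_examples P. h e \<in> Modal_examples {p}"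
    using gl by (auto simp: h_def Modal_examples_def chainR_def ValV_def Suc_le_eq)
  have L: "\<forall>c\<in>PL_concepts Ops P. \<forall>e\<in>PL_examples P. pl_sat e c \<longleftrightarrow> Modal_label (f c) (h e)"
  proof (intro ballI)
    fix c V assume c: "c \<in> PL_concepts Ops P" and V: "V \<in> PL_examples P"
    have "\<forall>x\<in>P. V x = ml_sat (chainR n) (ValV V) 0 (tr g d p (PVar x))"
    proof
      fix x assume x: "x \<in> P"
      have "ml_sat (chainR n) (ValV V) 0 (tr g d p (PVar x)) = (Suc (g x) \<in> ValV V p)"
        using chain_iter[of 0 "Suc (g x)" n] gl[OF x] by simp
      also have "\<dots> = V x" using x inj by (auto simp: ValV_def inj_on_def)
      finally show "V x = ml_sat (chainR n) (ValV V) 0 (tr g d p (PVar x))" by simp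
    qed
    then show "pl_sat V c \<longleftrightarrow> Modal_label (f c) (h V)"
      using sat_tr[of Ops P c V] c by (auto simp: Modal_label_def h_def f_def PL_concepts_def)
  qed
  have X: "\<forall>e\<in>Modal_examples {p}. (\<forall>c\<in>PL_concepts Ops P. Modal_label (f c) e) \<or>
        (\<forall>c\<in>PL_concepts Ops P. \<not> Modal_label (f c) e) \<or>
        (\<exists>e'\<in>PL_examples P. \<forall>c\<in>PL_concepts Ops P. Modal_label (f c) e \<longleftrightarrow> pl_sat e' c)"
  proof (intro ballI disjI2)
    fix e :: "'v pkripke" assume "e \<in> Modal_examples {p}"
    obtain W R Val w where e: "e = (W, R, Val, w)" by (cases e) auto
    define V' where "V' = (\<lambda>x. x \<in> P \<and> ml_sat R Val w (tr g d p (PVar x)))"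
    have "V' \<in> PL_examples P" by (auto simp: V'_def PL_examples_def)
    moreover have "\<forall>c\<in>PL_concepts Ops P. Modal_label (f c) e \<longleftrightarrow> pl_sat V' c"
      using sat_tr[of Ops P _ V' R Val w g d p]
      by (auto simp: Modal_label_def e f_def PL_concepts_def V'_def)
    ultimately show "\<exists>e'\<in>PL_examples P. \<forall>c\<in>PL_concepts Ops P. Modal_label (f c) e \<longleftrightarrow> pl_sat e' c"
      by blast
  qed
  show ?thesis unfolding pc_reducible_def
    using C E L X by blast
qed

theorem lemmaB4:
  fixes Ops :: "bfun set" and P :: "'v set" and p :: 'v
  assumes "finite P"
  shows "pc_reducible (PL_concepts Ops P) (PL_examples P) (\<lambda>\<phi> V. pl_sat V \<phi>)
           (Modal_concepts Ops True {p}) (Modal_examples {p}) Modal_label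
       \<and> pc_reducible (PL_concepts Ops P) (PL_examples P) (\<lambda>\<phi> V. pl_sat V \<phi>)
           (Modal_concepts Ops False {p}) (Modal_examples {p}) Modal_label"
  using main[OF assms] by blast

end
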